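(* Let $A$ be a finite set and let $f\in A^A$ with $f\notin T$ be of type I, II or III. Then $M_f=\langle f\rangle\cup C$ is a minimal u-closed monoid; in particular $M_f=\overline{M_f}$. Moreover, $\mathrm{End}\,\mathrm{gQuord}\,M_f=\mathrm{End}\,\mathrm{Quord}\,M_f$.
   Context: $C$ is the set of all constant unary maps on $A$, $T=\{\mathrm{id}_A\}\cup C$, and $\langle f\rangle$ is the submonoid of $A^A$ generated by $f$. Types: (I) $f^2=f$; (II) $f^2$ is a constant $v$ and $|\{x\in A\mid fx=v\}|\ge3$; (III) $f$ is a permutation with $f^p=\mathrm{id}_A$ for some prime $p$ and $f$ has at least two cycles of length $p$. A translation of an $n$-ary operation $g$ is $x\mapsto g(a_1,\dots,a_{i-1},x,a_{i+1},\dots,a_n)$ with fixed $a_j$; $\mathrm{trl}(g)$ is the set of translations ($\{g\}$ for unary $g$); $N^*:=\{g\mid\mathrm{trl}(g)\subseteq N\}$. The u-closure $\overline M$ is the intersection of all monoids $N$ with $M\subseteq N\le A^A$ such that $N^*$ is a clone; $M$ is u-closed if $\overline M=M$. A minimal u-closed monoid is a u-closed monoid $M\le A^A$ with $T\subsetneq M$ such that every u-closed monoid properly contained in $M$ equals $T$. A relation $\rho\subseteq A^m$ is a generalized quasiorder if it is reflexive and for every $m\times m$-matrix over $A$ whose rows and columns all lie in $\rho$ the diagonal lies in $\rho$ (binary ones are exactly the quasiorders, i.e., reflexive transitive binary relations). $\mathrm{gQuord}\,M$ (resp. $\mathrm{Quord}\,M$) is the set of generalized quasiorders (resp. quasiorders)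 on $A$ preserved by all maps of $M$, and $\mathrm{End}\,Q$ is the set of all unary maps preserving every relation in $Q$. *)

theory Defs
  imports "HOL-Computational_Algebra.Primes"
begin

text \<open>The base set A is the universe of a finite type 'a. Unary maps are functions 'a => 'a.\<close>

definition constmaps :: "('a \<Rightarrow> 'a) set" where
  "constmaps = {g. \<exists>c. g = (\<lambda>_. c)}"

definition Tset :: "('a \<Rightarrow> 'a) set" where
  "Tset = insert id constmaps"

definition gen_monoid :: "('a \<Rightarrow> 'a) \<Rightarrow> ('a \<Rightarrow> 'a) set" where
  "gen_monoid f = range (\<lambda>n. f ^^ n)"

definition is_monoid :: "('a \<Rightarrow> 'a) set \<Rightarrow> bool" where
  "is_monoid N \<longleftrightarrow> id \<in> N \<and> (\<forall>g\<in>N. \<forall>h\<in>N. g \<circ> h \<in> N)"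

text \<open>Finitary operations: an n-ary operation (n >= 1) is a pair (n, g) where
  g :: (nat => 'a) => 'a depends only on the arguments with index < n.\<close>

type_synonym 'a oper = "nat \<times> ((nat \<Rightarrow> 'a) \<Rightarrow> 'a)"

definition wf_op :: "'a oper \<Rightarrow> bool" where
  "wf_op F \<longleftrightarrow> fst F \<ge> 1 \<and> (\<forall>x y. (\<forall>i<fst F. x i = y i) \<longrightarrow> snd F x = snd F y)"

definition is_clone :: "'a oper set \<Rightarrow> bool" where
  "is_clone F \<longleftrightarrow>
     (\<forall>G\<in>F. wf_op G) \<and>
     (\<forall>n i. 1 \<le> n \<and> i < n \<longrightarrow> (n, \<lambda>x. x i) \<in> F) \<and>
     (\<forall>n g m hs. (n, g) \<in> F \<and> (\<forall>i<n. (m, hs i) \<in> F)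
        \<longrightarrow> (m, \<lambda>x. g (\<lambda>i. hs i x)) \<in> F)"

definition trl :: "'a oper \<Rightarrow> ('a \<Rightarrow> 'a) set" where
  "trl F = {t. \<exists>i<fst F. \<exists>a. t = (\<lambda>x. snd F (a(i := x)))}"

definition Nstar :: "('a \<Rightarrow> 'a) set \<Rightarrow> 'a oper set" where
  "Nstar N = {F. wf_op F \<and> trl F \<subseteq> N}"

definition uclosure :: "('a \<Rightarrow> 'a) set \<Rightarrow> ('a \<Rightarrow> 'a) set" where
  "uclosure M = \<Inter>{N. M \<subseteq> N \<and> is_monoid N \<and> is_clone (Nstar N)}"

definition u_closed :: "('a \<Rightarrow> 'a) set \<Rightarrow> bool" where
  "u_closed M \<longleftrightarrow> is_monoid M \<and> uclosure M = M"

definition minimal_u_closed :: "('a \<Rightarrow> 'a) set \<Rightarrow> bool" where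
  "minimal_u_closed M \<longleftrightarrow> u_closed M \<and> Tset \<subset> M \<and>
     (\<forall>M'. u_closed M' \<and> M' \<subset> M \<longrightarrow> M' = Tset)"

definition type_I :: "('a \<Rightarrow> 'a) \<Rightarrow> bool" where
  "type_I f \<longleftrightarrow> f \<circ> f = f"

definition type_II :: "('a \<Rightarrow> 'a) \<Rightarrow> bool" where
  "type_II f \<longleftrightarrow> (\<exists>v. f \<circ> f = (\<lambda>_. v) \<and> card {x. f x = v} \<ge> 3)"

definition orbit_of :: "('a \<Rightarrow> 'a) \<Rightarrow> 'a \<Rightarrow> 'a set" where
  "orbit_of f x = {(f ^^ k) x | k. True}"

definition type_III :: "('a \<Rightarrow> 'a) \<Rightarrow> bool" where
  "type_III f \<longleftrightarrow> bij f \<and> (\<exists>p::nat. prime p \<and> f ^^ p = id \<and>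
     (\<exists>x y. card (orbit_of f x) = p \<and> card (orbit_of f y) = p \<and> orbit_of f x \<noteq> orbit_of f y))"

text \<open>Relations: an m-ary relation is (m, R) with R a set of lists of length m.\<close>

type_synonym 'a rel = "nat \<times> 'a list set"

definition gen_quasiorder :: "'a rel \<Rightarrow> bool" where
  "gen_quasiorder \<rho> \<longleftrightarrow> (let m = fst \<rho>; R = snd \<rho> in
     m \<ge> 1 \<and> (\<forall>r\<in>R. length r = m) \<and>
     (\<forall>a. replicate m a \<in> R) \<and>
     (\<forall>X :: nat \<Rightarrow> nat \<Rightarrow> 'a.
        (\<forall>i<m. map (\<lambda>j. X i j) [0..<m] \<in> R) \<and> (\<forall>j<m. map (\<lambda>i. X i j) [0..<m] \<in> R)
        \<longrightarrow> map (\<lambda>i. X i i) [0..<m] \<in> R))"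

definition preserves_rel :: "('a \<Rightarrow> 'a) \<Rightarrow> 'a rel \<Rightarrow> bool" where
  "preserves_rel f \<rho> \<longleftrightarrow> (\<forall>r\<in>snd \<rho>. map f r \<in> snd \<rho>)"

definition gQuord :: "('a \<Rightarrow> 'a) set \<Rightarrow> 'a rel set" where
  "gQuord M = {\<rho>. gen_quasiorder \<rho> \<and> (\<forall>f\<in>M. preserves_rel f \<rho>)}"

definition quasiorder :: "'a rel \<Rightarrow> bool" where
  "quasiorder \<rho> \<longleftrightarrow> fst \<rho> = 2 \<and> (\<forall>r\<in>snd \<rho>. length r = 2) \<and>
     (\<forall>a. [a, a] \<in> snd \<rho>) \<and>
     (\<forall>a b c. [a, b] \<in> snd \<rho> \<and> [b, c] \<in> snd \<rho> \<longrightarrow> [a, c] \<in> snd \<rho>)"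

definition Quord :: "('a \<Rightarrow> 'a) set \<Rightarrow> 'a rel set" where
  "Quord M = {\<rho>. quasiorder \<rho> \<and> (\<forall>f\<in>M. preserves_rel f \<rho>)}"

definition End :: "'a rel set \<Rightarrow> ('a \<Rightarrow> 'a) set" where
  "End Q = {f. \<forall>\<rho>\<in>Q. preserves_rel f \<rho>}"

end

theory Submission
  imports Defs "HOL-Number_Theory.Cong"
begin


lemma fp_mult_id: "f^^p = id \<Longrightarrow> f^^(p*m) = id"
proof (induction m)
  case (Suc m)
  have "f^^(p*Suc m) = f^^p \<circ> f^^(p*m)" by (simp add: funpow_add[symmetric])
  then show ?case using Suc by simp
qed simp

lemma fp_mod: "f^^p = id \<Longrightarrow> f^^n = f^^(n mod p)"
proof -
  assume a: "f^^p = id"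
  have "f^^(n mod p + p*(n div p)) = f^^(n mod p)" using fp_mult_id[OF a]
    by (simp only: funpow_add) simp
  thus ?thesis by simp
qed

lemma pow_inv:
  assumes "prime p" "f^^p = id" "\<not> p dvd d"
  shows "\<exists>j. (f^^d)^^j = f"
proof -
  have "coprime d p" using assms(1,3) prime_imp_coprime_nat by (metis coprime_commute)
  then obtain x where "[d * x = Suc 0] (mod p)" using cong_solve_coprime_nat by blast
  hence "(d*x) mod p = 1" using assms(1) unfolding cong_def
    by (metis One_nat_def mod_less prime_gt_1_nat)
  hence "(f^^d)^^x = f" using fp_mod[OF assms(2), of "d*x"] by (simp add: funpow_mult)
  thus ?thesis by blast
qed

lemma fixed_pow: "g x = x \<Longrightarrow> (g^^j) x = x"
  by (induction j) auto

lemma lemA_le: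
  assumes "prime p" "f^^p = id" "f w \<noteq> w" "(f^^k) w = (f^^k') w" "k \<le> k'"
  shows "f^^k = f^^k'"
proof -
  obtain e where e: "k' = k + e" using assms(5) le_Suc_ex by blast
  have p1: "p \<ge> 1" using prime_gt_1_nat[OF assms(1)] by simp
  have "(f^^(k' + k*(p-1))) w = (f^^(k*(p-1))) ((f^^k') w)"
    by (metis funpow_add add.commute comp_apply)
  also have "\<dots> = (f^^(k*(p-1))) ((f^^k) w)" using assms(4) by simp
  also have "\<dots> = (f^^(k*(p-1)+k)) w" by (simp add: funpow_add)
  also have "k*(p-1)+k = p*k" using p1
    by (metis add.commute mult.commute mult_eq_if not_one_le_zero)
  also have "(f^^(p*k)) w = w" using fp_mult_id[OF assms(2)] by simp
  finally have 1: "(f^^(k' + k*(p-1))) w = w" .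
  have "k' + k*(p-1) = e + p*k" using e p1
    by (metis \<open>k * (p - 1) + k = p * k\<close> add.assoc add.commute)
  hence "(f^^(k' + k*(p-1))) w = (f^^e) w" using fp_mult_id[OF assms(2)]
    by (simp add: funpow_add)
  hence fe: "(f^^e) w = w" using 1 by simp
  have "p dvd e"
  proof (rule ccontr)
    assume "\<not> p dvd e"
    then obtain j where "(f^^e)^^j = f" using pow_inv[OF assms(1,2)] by blast
    hence "f w = w" using fixed_pow[of "f^^e" w j, OF fe] by simp
    thus False using assms(3) by simp
  qed
  then obtain m where "e = p*m" by blast
  thus ?thesis using e fp_mult_id[OF assms(2)] by (simp add: funpow_add)
qed

lemma lemA:
  assumes "prime p" "f^^p = id" "f w \<noteq> w" "(f^^k) w = (f^^k') w"
  shows "f^^k = f^^k'"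
  using lemA_le[OF assms(1-3)] assms(4) by (metis nat_le_linear)

lemma orbit_sub:
  assumes "f^^p = id" "p \<ge> 1" "orbit_of f x \<inter> orbit_of f y \<noteq> {}"
  shows "orbit_of f y \<subseteq> orbit_of f x"
proof
  fix z assume "z \<in> orbit_of f y"
  then obtain n where z: "z = (f^^n) y" unfolding orbit_of_def by blast
  obtain i j where ij: "(f^^i) x = (f^^j) y" using assms(3) unfolding orbit_of_def by blast
  have "j \<le> p*j" using assms(2) by simp
  hence "n + p*j = (n + (p-1)*j) + j"
    by (simp only: diff_mult_distrib mult_1_left)
  have "z = (f^^n) ((f^^(p*j)) y)" using z fp_mult_id[OF assms(1)] by simp
  also from \<open>n + p*j = (n + (p-1)*j) + j\<close> have "(f^^n) ((f^^(p*j)) y) = (f^^(n + (p-1)*j)) ((f^^j) y)"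
    by (metis funpow_add comp_apply)
  also have "\<dots> = (f^^(n + (p-1)*j + i)) x" using ij by (simp add: funpow_add)
  finally show "z \<in> orbit_of f x" unfolding orbit_of_def by blast
qed



definition Mf :: "('a \<Rightarrow> 'a) \<Rightarrow> ('a \<Rightarrow> 'a) set" where
  "Mf f = gen_monoid f \<union> constmaps"

definition Ed :: "('a \<Rightarrow> 'a) \<Rightarrow> 'a \<Rightarrow> 'a \<Rightarrow> ('a \<times> 'a) set" where
  "Ed f a b = {((f^^k) a, (f^^k) b) | k. (f^^k) a \<noteq> (f^^k) b}"

definition rh :: "('a \<Rightarrow> 'a) \<Rightarrow> 'a \<Rightarrow> 'a \<Rightarrow> 'a rel" where
  "rh f a b = (2, {[x, y] | x y. (x, y) \<in> (Ed f a b)\<^sup>*})"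

lemma two_edge:
  assumes "(x,y) \<in> R\<^sup>*" "R \<subseteq> {(a1,b1),(a2,b2)}"
  shows "x = y \<or> (x,y) = (a1,b1) \<or> (x,y) = (a2,b2) \<or> (x = a1 \<and> b1 = a2 \<and> y = b2)
     \<or> (x = a2 \<and> b2 = a1 \<and> y = b1)"
  using assms(1)
proof induct
  case base then show ?case by simp
next
  case (step y z)
  then have "(y,z) = (a1,b1) \<or> (y,z) = (a2,b2)" using assms(2) by blast
  then show ?case using step.hyps(3) by auto
qed

lemma disj_path:
  assumes "(x,y) \<in> (Ed f a b)\<^sup>*" "orbit_of f a \<inter> orbit_of f b = {}"
  shows "x = y \<or> (\<exists>k. x = (f^^k) a \<and> y = (f^^k) b)"
  using assms(1)
proof induct
  case base then show ?case by simp
next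
  case (step y z)
  obtain j where j: "y = (f^^j) a" "z = (f^^j) b" using step.hyps(2) unfolding Ed_def by blast
  show ?case
  proof (cases "x = y")
    case True then show ?thesis using j by blast
  next
    case False
    then obtain k where k: "x = (f^^k) a" "y = (f^^k) b" using step.hyps(3) by blast
    have "y \<in> orbit_of f a" "y \<in> orbit_of f b" using j k unfolding orbit_of_def by blast+
    then show ?thesis using assms(2) by blast
  qed
qed

lemma first_edge:
  assumes "(x,y) \<in> (Ed f a b)\<^sup>*" "x \<noteq> y"
  shows "\<exists>k. x = (f^^k) a \<and> (f^^k) a \<noteq> (f^^k) b"
  using assms by (cases rule: converse_rtranclE) (auto simp: Ed_def)

lemma Ed_pow:
  assumes "(x,y) \<in> (Ed f a b)\<^sup>*"
  shows "((f^^n) x, (f^^n) y) \<in> (Ed f a b)\<^sup>*"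
  using assms
proof induct
  case base then show ?case by simp
next
  case (step y z)
  obtain j where j: "y = (f^^j) a" "z = (f^^j) b" using step.hyps(2) unfolding Ed_def by blast
  have "((f^^n) y, (f^^n) z) \<in> (Ed f a b)\<^sup>*"
  proof (cases "(f^^n) y = (f^^n) z")
    case True then show ?thesis by simp
  next
    case False
    have e: "(f^^n) y = (f^^(n+j)) a" "(f^^n) z = (f^^(n+j)) b" using j by (simp_all add: funpow_add)
    have "((f^^n) y, (f^^n) z) \<in> Ed f a b" unfolding Ed_def mem_Collect_eq
      by (rule exI[of _ "n+j"]) (use e False in simp)
    then show ?thesis by (rule r_into_rtrancl)
  qed
  then show ?case by (rule rtrancl_trans[OF step.hyps(3)])
qed

lemma rh_quasi: "quasiorder (rh f a b)"
  unfolding quasiorder_def rh_def by (auto intro: rtrancl_trans)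

lemma in_constmaps: "g \<in> constmaps \<longleftrightarrow> (\<forall>x y. g x = g y)"
proof
  assume "g \<in> constmaps" then show "\<forall>x y. g x = g y" unfolding constmaps_def by auto
next
  assume "\<forall>x y. g x = g y" then have "g = (\<lambda>_. g undefined)" by auto
  then show "g \<in> constmaps" unfolding constmaps_def by blast
qed

lemma rh_pres:
  assumes "g \<in> Mf f" shows "preserves_rel g (rh f a b)"
proof (cases "g \<in> constmaps")
  case True
  then obtain c where "g = (\<lambda>_. c)" unfolding constmaps_def by blast
  then show ?thesis unfolding preserves_rel_def rh_def by auto
next
  case False
  then obtain n where "g = f^^n" using assms unfolding Mf_def gen_monoid_def by auto
  show ?thesis unfolding preserves_rel_def
  proof
    fix r assume "r \<in> snd (rh f a b)"
    then obtain x y where r: "r = [x,y]" "(x,y) \<in> (Ed f a b)\<^sup>*" unfolding rh_def by auto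
    then show "map g r \<in> snd (rh f a b)" using Ed_pow[OF r(2), of n] \<open>g = f^^n\<close>
      unfolding rh_def by simp
  qed
qed

lemma rh_in_Quord: "rh f a b \<in> Quord (Mf f)"
  unfolding Quord_def by (simp add: rh_quasi rh_pres)

lemma End_pair:
  assumes "h \<in> End (Quord (Mf f))"
  shows "(h a, h b) \<in> (Ed f a b)\<^sup>*"
proof -
  have "(a, b) \<in> (Ed f a b)\<^sup>*"
  proof (cases "a = b")
    case False
    then have "(a,b) \<in> Ed f a b" unfolding Ed_def mem_Collect_eq
      by (intro exI[of _ 0]) simp
    then show ?thesis by (rule r_into_rtrancl)
  qed simp
  then have "[a,b] \<in> snd (rh f a b)" unfolding rh_def by simp
  moreover have "preserves_rel h (rh f a b)" using assms rh_in_Quord[of f a b] unfolding End_def by auto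
  ultimately have "map h [a,b] \<in> snd (rh f a b)" unfolding preserves_rel_def by auto
  then show ?thesis unfolding rh_def by simp
qed

lemma L1:
  assumes "h \<in> End (Quord (Mf f))" "h a \<noteq> h b"
  shows "\<exists>k. h a = (f^^k) a \<and> (f^^k) a \<noteq> (f^^k) b"
  using first_edge[OF End_pair[OF assms(1)] assms(2)] .



definition Hc :: "('a \<Rightarrow> 'a) \<Rightarrow> bool" where
  "Hc f \<longleftrightarrow> (\<forall>k x y. (f^^k) x \<noteq> (f^^k) y \<longrightarrow> k = 0 \<or> ((f^^k) x = f x \<and> (f^^k) y = f y))"

lemma H_img:
  assumes "Hc f" "h \<in> End (Quord (Mf f))" "h a \<noteq> h b"
  shows "h a = a \<or> h a = f a"
proof -
  obtain k where k: "h a = (f^^k) a" "(f^^k) a \<noteq> (f^^k) b" using L1[OF assms(2,3)] by blast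
  then show ?thesis using assms(1) unfolding Hc_def by (cases "k = 0") auto
qed

lemma H_Ed:
  assumes "Hc f" shows "Ed f a b \<subseteq> {(a,b),(f a, f b)}"
proof
  fix e assume "e \<in> Ed f a b"
  then obtain k where k: "e = ((f^^k) a, (f^^k) b)" "(f^^k) a \<noteq> (f^^k) b" unfolding Ed_def by blast
  then show "e \<in> {(a,b),(f a, f b)}" using assms unfolding Hc_def by (cases "k = 0") auto
qed

lemma H_mix:
  assumes "Hc f" "h \<in> End (Quord (Mf f))" "h c = c" "c \<noteq> f c" "h d = f d" "d \<noteq> f d"
  shows "c = f d \<or> d = f c"
proof -
  have "(c, f d) \<in> (Ed f c d)\<^sup>*" using End_pair[OF assms(2), of c d] assms(3,5) by simp
  from two_edge[OF this H_Ed[OF assms(1)]] show ?thesis using assms(4,6) by auto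
qed

lemma H_main:
  assumes "Hc f" "h \<in> End (Quord (Mf f))"
    and nomix: "(\<forall>c. h c = c \<or> h c = f c) \<Longrightarrow> \<not>(\<exists>c d. h c = c \<and> c \<noteq> f c \<and> h d = f d \<and> d \<noteq> f d)"
  shows "h \<in> Mf f"
proof (cases "\<forall>x y. h x = h y")
  case True
  then show ?thesis unfolding Mf_def using in_constmaps by blast
next
  case False
  then obtain x y where xy: "h x \<noteq> h y" by blast
  have img: "h c = c \<or> h c = f c" for c
  proof (cases "h c = h x")
    case True
    then show ?thesis using H_img[OF assms(1,2), of c y] xy by auto
  next
    case False
    then show ?thesis using H_img[OF assms(1,2), of c x] by auto
  qed
  show ?thesis
  proof (cases "\<exists>c. h c = c \<and> c \<noteq> f c")
    case True
    have "h d = d" for d using img[of d] True nomix img by metis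
    then have "h = f^^0" by auto
    then show ?thesis unfolding Mf_def gen_monoid_def by blast
  next
    case False
    have "h d = f d" for d using img[of d] False by metis
    then have "h = f^^1" by auto
    then show ?thesis unfolding Mf_def gen_monoid_def by blast
  qed
qed

lemma typeI_pow: "f \<circ> f = f \<Longrightarrow> f^^(Suc k) = f"
proof (induction k)
  case (Suc k)
  then show ?case by (metis funpow_Suc_right o_assoc)
qed simp

lemma typeI_End:
  assumes "type_I f" "h \<in> End (Quord (Mf f))"
  shows "h \<in> Mf f"
proof -
  have ff: "f \<circ> f = f" using assms(1) unfolding type_I_def .
  have fx: "f (f x) = f x" for x using ff by (metis comp_apply)
  have H: "Hc f" unfolding Hc_def
  proof (intro allI impI)
    fix k x y assume "(f^^k) x \<noteq> (f^^k) y"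
    show "k = 0 \<or> ((f^^k) x = f x \<and> (f^^k) y = f y)"
    proof (cases k)
      case (Suc j) then show ?thesis using typeI_pow[OF ff, of j] by simp
    qed simp
  qed
  have "\<not>(\<exists>c d. h c = c \<and> c \<noteq> f c \<and> h d = f d \<and> d \<noteq> f d)"
  proof
    assume "\<exists>c d. h c = c \<and> c \<noteq> f c \<and> h d = f d \<and> d \<noteq> f d"
    then obtain c d where cd: "h c = c" "c \<noteq> f c" "h d = f d" "d \<noteq> f d" by blast
    from H_mix[OF H assms(2) cd] show False using cd fx by metis
  qed
  then show ?thesis using H_main[OF H assms(2)] by blast
qed

lemma typeII_pow:
  assumes "f \<circ> f = (\<lambda>_. v)" shows "(f^^(Suc (Suc j))) x = v"
proof (induction j arbitrary: x)
  case 0 then show ?case using assms by (metis comp_apply funpow_0 funpow_Suc_right one_add_one plus_1_eq_Suc funpow_add)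
next
  case (Suc j)
  then show ?case by (metis comp_apply funpow_Suc_right)
qed

lemma three_elem:
  assumes "finite S" "card S \<ge> 3"
  shows "\<exists>k\<in>S. k \<noteq> u \<and> k \<noteq> w"
proof (rule ccontr)
  assume "\<not> ?thesis"
  then have "S \<subseteq> {u, w}" by blast
  then have "card S \<le> card {u, w}" by (simp add: card_mono)
  also have "\<dots> \<le> 2" by (simp add: card_insert_le_m1)
  finally show False using assms(2) by simp
qed

lemma typeII_End:
  fixes f :: "'a::finite \<Rightarrow> 'a"
  assumes "type_II f" "h \<in> End (Quord (Mf f))"
  shows "h \<in> Mf f"
proof -
  obtain v where ff: "f \<circ> f = (\<lambda>_. v)" and card: "card {x. f x = v} \<ge> 3"
    using assms(1) unfolding type_II_def by blast
  have fx: "f (f x) = v" for x using ff by (metis comp_apply)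
  have fv: "f v = v" using fx by metis
  have H: "Hc f" unfolding Hc_def
  proof (intro allI impI)
    fix k x y assume ne: "(f^^k) x \<noteq> (f^^k) y"
    show "k = 0 \<or> ((f^^k) x = f x \<and> (f^^k) y = f y)"
    proof (cases k)
      case (Suc j)
      show ?thesis
      proof (cases j)
        case (Suc i) then show ?thesis using typeII_pow[OF ff, of i] ne \<open>k = Suc j\<close> by simp
      qed (use \<open>k = Suc j\<close> in simp)
    qed simp
  qed
  have mix: "c = f d \<or> d = f c" if "h c = c" "c \<noteq> f c" "h d = f d" "d \<noteq> f d" for c d
    using H_mix[OF H assms(2) that] .
  have K: "\<exists>k. f k = v \<and> k \<noteq> v \<and> k \<noteq> u" for u
    using three_elem[OF _ card, of v u] by auto
  have "\<not>(\<exists>c d. h c = c \<and> c \<noteq> f c \<and> h d = f d \<and> d \<noteq> f d)"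
    if hk: "\<forall>k. h k = k \<or> h k = f k"
  proof
    assume "\<exists>c d. h c = c \<and> c \<noteq> f c \<and> h d = f d \<and> d \<noteq> f d"
    then obtain c d where cd: "h c = c" "c \<noteq> f c" "h d = f d" "d \<noteq> f d" by blast
    from mix[OF cd] show False
    proof
      assume dfc: "d = f c"
      obtain k where k: "f k = v" "k \<noteq> v" "k \<noteq> d" using K by blast
      from hk[rule_format, of k] show False
      proof
        assume "h k = k"
        from mix[OF this _ cd(3,4)] show False using k dfc fx fv cd by auto
      next
        assume "h k = f k"
        from mix[OF cd(1,2) this] show False using k dfc fx fv cd by auto
      qed
    next
      assume cfd: "c = f d"
      obtain k where k: "f k = v" "k \<noteq> v" "k \<noteq> c" using K by blast
      from hk[rule_format, of k] show False
      proof
        assume "h k = k"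
        from mix[OF this _ cd(3,4)] show False using k cfd fx fv cd by auto
      next
        assume "h k = f k"
        from mix[OF cd(1,2) this] show False using k cfd fx fv cd by auto
      qed
    qed
  qed
  then show ?thesis using H_main[OF H assms(2)] by blast
qed



lemma orbit_fixed: "f w = w \<Longrightarrow> orbit_of f w = {w}"
  unfolding orbit_of_def using fixed_pow[of f w] by auto

lemma typeIII_End:
  assumes "type_III f" "h \<in> End (Quord (Mf f))"
  shows "h \<in> Mf f"
proof -
  obtain p x0 y0 where p: "prime p" "f^^p = id" and cx: "card (orbit_of f x0) = p"
    and cy: "card (orbit_of f y0) = p" and nxy: "orbit_of f x0 \<noteq> orbit_of f y0"
    using assms(1) unfolding type_III_def by blast
  have p1: "p \<ge> 1" and p2: "p \<noteq> 1" using prime_gt_1_nat[OF p(1)] by auto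
  have nf: "f w \<noteq> w" if "card (orbit_of f w) = p" for w
    using that orbit_fixed[of f w] p2 by auto
  have sub: "orbit_of f y \<subseteq> orbit_of f x" if "orbit_of f x \<inter> orbit_of f y \<noteq> {}" for x y
    using orbit_sub[OF p(2) p1 that] .
  have eqo: "orbit_of f x = orbit_of f y" if "orbit_of f x \<inter> orbit_of f y \<noteq> {}" for x y
    using sub[of x y] sub[of y x] that by (simp add: Int_commute subset_antisym)
  have dxy: "orbit_of f x0 \<inter> orbit_of f y0 = {}" using eqo nxy by blast
  show ?thesis
  proof (cases "\<forall>x y. h x = h y")
    case True
    then show ?thesis unfolding Mf_def using in_constmaps by blast
  next
    case False
    then obtain x1 y1 where xy: "h x1 \<noteq> h y1" by blast
    have pairlem: "\<exists>k. h c = (f^^k) c \<and> h d = (f^^k) d"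
      if disj: "orbit_of f c \<inter> orbit_of f d = {}" for c d
    proof -
      from disj_path[OF End_pair[OF assms(2)] disj]
      have "h c = h d \<or> (\<exists>k. h c = (f^^k) c \<and> h d = (f^^k) d)" .
      moreover have "h c \<noteq> h d"
      proof
        assume eq: "h c = h d"
        obtain b where b: "h b \<noteq> h c" using xy by metis
        obtain i where i: "h c = (f^^i) c" using L1[OF assms(2), of c b] b by metis
        obtain j where j: "h d = (f^^j) d" using L1[OF assms(2), of d b] b eq by metis
        have "h c \<in> orbit_of f c" using i unfolding orbit_of_def by blast
        moreover have "h c \<in> orbit_of f d" using j eq unfolding orbit_of_def by auto
        ultimately
        show False using disj by blast
      qed
      ultimately show ?thesis by blast
    qed
    obtain k where k: "h x0 = (f^^k) x0" "h y0 = (f^^k) y0" using pairlem[OF dxy] by blast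
    have "h z = (f^^k) z" for z
    proof -
      obtain w where w: "w = x0 \<or> w = y0" "orbit_of f w \<inter> orbit_of f z = {}"
      proof (cases "orbit_of f x0 \<inter> orbit_of f z = {}")
        case True then show ?thesis using that by blast
      next
        case False
        then have "orbit_of f y0 \<inter> orbit_of f z = {}"
          using eqo[of x0 z] eqo[of y0 z] nxy by blast
        then show ?thesis using that by blast
      qed
      obtain k' where k': "h w = (f^^k') w" "h z = (f^^k') z" using pairlem[OF w(2)] by blast
      have "card (orbit_of f w) = p" using w(1) cx cy by blast
      then have "f w \<noteq> w" by (rule nf)
      moreover have "(f^^k) w = (f^^k') w" using w(1) k k' by auto
      ultimately have "f^^k = f^^k'" using lemA[OF p] by blast
      then show ?thesis using k' by simp
    qed
    then have "h = f^^k" by auto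
    then show ?thesis unfolding Mf_def gen_monoid_def by blast
  qed
qed



lemma pres_pair:
  assumes "preserves_rel t \<rho>" "[x,y] \<in> snd \<rho>"
  shows "[t x, t y] \<in> snd \<rho>"
  using assms unfolding preserves_rel_def by force

lemma qo_refl: "quasiorder \<rho> \<Longrightarrow> [a,a] \<in> snd \<rho>"
  unfolding quasiorder_def by blast

lemma qo_trans: "quasiorder \<rho> \<Longrightarrow> [a,b] \<in> snd \<rho> \<Longrightarrow> [b,c] \<in> snd \<rho> \<Longrightarrow> [a,c] \<in> snd \<rho>"
  unfolding quasiorder_def by blast

lemma qo_len2: "quasiorder \<rho> \<Longrightarrow> r \<in> snd \<rho> \<Longrightarrow> \<exists>x y. r = [x,y]"
  unfolding quasiorder_def
  by (metis (no_types, lifting) One_nat_def Suc_1 length_0_conv length_Suc_conv)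

lemma pres_by_pairs:
  assumes "quasiorder \<rho>" "\<And>x y. [x,y] \<in> snd \<rho> \<Longrightarrow> [t x, t y] \<in> snd \<rho>"
  shows "preserves_rel t \<rho>"
  unfolding preserves_rel_def
proof
  fix r assume "r \<in> snd \<rho>"
  then obtain x y where "r = [x,y]" using qo_len2[OF assms(1)] by blast
  then have "[x,y] \<in> snd \<rho>" using \<open>r \<in> snd \<rho>\<close> by simp
  then have "[t x, t y] \<in> snd \<rho>" by (rule assms(2))
  then show "map t r \<in> snd \<rho>" using \<open>r = [x,y]\<close> by simp
qed

lemma wf_eq:
  assumes "wf_op (n, g)" "\<And>i. i < n \<Longrightarrow> x i = y i"
  shows "g x = g y"
proof -
  have "\<forall>x y. (\<forall>i<n. x i = y i) \<longrightarrow> g x = g y" using assms(1) unfolding wf_op_def by simp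
  then show ?thesis using assms(2) by blast
qed

lemma op_pres:
  assumes wf: "wf_op (n, g)" and tr: "trl (n, g) \<subseteq> M"
    and char: "\<And>t. t \<in> M \<Longrightarrow> preserves_rel t \<rho>" and qo: "quasiorder \<rho>"
    and uw: "\<forall>i<n. [u i, w i] \<in> snd \<rho>"
  shows "[g u, g w] \<in> snd \<rho>"
proof -
  have step: "k \<le> n \<Longrightarrow> [g u, g (\<lambda>i. if i < k then w i else u i)] \<in> snd \<rho>" for k
  proof (induction k)
    case 0
    then show ?case using qo_refl[OF qo] by simp
  next
    case (Suc k)
    define v where "v = (\<lambda>i. if i < k then w i else u i)"
    have kn: "k < n" using Suc.prems by simp
    have IH: "[g u, g v] \<in> snd \<rho>" using Suc v_def by simp
    define t where "t = (\<lambda>x. g (v(k := x)))"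
    have "t \<in> trl (n, g)" unfolding trl_def t_def mem_Collect_eq fst_conv snd_conv
      by (rule exI[of _ k], rule conjI[OF kn], rule exI[of _ v], rule refl)
    then have "preserves_rel t \<rho>" using tr char by blast
    then have "[t (u k), t (w k)] \<in> snd \<rho>" by (rule pres_pair[OF _ uw[rule_format, OF kn]])
    moreover have "v(k := u k) = v" unfolding v_def by auto
    moreover have "v(k := w k) = (\<lambda>i. if i < Suc k then w i else u i)" unfolding v_def by auto
    ultimately have "[g v, g (\<lambda>i. if i < Suc k then w i else u i)] \<in> snd \<rho>"
      unfolding t_def by simp
    then show ?case by (rule qo_trans[OF qo IH])
  qed
  have "g (\<lambda>i. if i < n then w i else u i) = g w" by (rule wf_eq[OF wf]) simp
  then show ?thesis using step[of n] by simp
qed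

lemma clone_lemma:
  fixes M :: "('a \<Rightarrow> 'a) set" and Q :: "'a rel set"
  assumes char: "\<And>t. t \<in> M \<longleftrightarrow> (\<forall>\<rho>\<in>Q. preserves_rel t \<rho>)"
    and qo: "\<forall>\<rho>\<in>Q. quasiorder \<rho>"
  shows "is_clone (Nstar M)"
  unfolding is_clone_def
proof (intro conjI allI impI)
  show "\<forall>G\<in>Nstar M. wf_op G" unfolding Nstar_def by blast
next
  fix n i :: nat assume ni: "1 \<le> n \<and> i < n"
  have idM: "id \<in> M" using char unfolding preserves_rel_def by simp
  have cM: "(\<lambda>_. c) \<in> M" for c
  proof -
    have "preserves_rel (\<lambda>_. c) \<rho>" if "\<rho> \<in> Q" for \<rho>
    proof -
      have q: "quasiorder \<rho>" using qo that by blast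
      show ?thesis by (rule pres_by_pairs[OF q]) (simp add: qo_refl[OF q])
    qed
    then show ?thesis using char by blast
  qed
  have "wf_op (n, \<lambda>x::nat \<Rightarrow> 'a. x i)" unfolding wf_op_def using ni by auto
  moreover have "trl (n, \<lambda>x::nat \<Rightarrow> 'a. x i) \<subseteq> M"
  proof
    fix t assume "t \<in> trl (n, \<lambda>x::nat \<Rightarrow> 'a. x i)"
    then obtain j a where t: "t = (\<lambda>x. (a(j := x)) i)" unfolding trl_def by auto
    show "t \<in> M"
    proof (cases "j = i")
      case True
      then have "t = id" using t by auto
      then show ?thesis using idM by simp
    next
      case False
      then have "t = (\<lambda>_. a i)" using t by auto
      then show ?thesis using cM by simp
    qed
  qed
  ultimately show "(n, \<lambda>x. x i) \<in> Nstar M" unfolding Nstar_def by blast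
next
  fix n g m hs
  assume as: "(n, g) \<in> Nstar M \<and> (\<forall>i<n. (m, hs i) \<in> Nstar M)"
  have wfg: "wf_op (n, g)" and trg: "trl (n, g) \<subseteq> M" using as unfolding Nstar_def by auto
  have wfh: "wf_op (m, hs i)" and trh: "trl (m, hs i) \<subseteq> M" if "i < n" for i
    using as that unfolding Nstar_def by auto
  have n1: "n \<ge> 1" using wfg unfolding wf_op_def by simp
  have m1: "m \<ge> 1" using wfh[of 0] n1 unfolding wf_op_def by simp
  have "wf_op (m, \<lambda>x. g (\<lambda>i. hs i x))"
    unfolding wf_op_def
  proof (intro conjI allI impI)
    show "1 \<le> fst (m, \<lambda>x. g (\<lambda>i. hs i x))" using m1 by simp
  next
    fix x y :: "nat \<Rightarrow> 'a" assume "\<forall>i<fst (m, \<lambda>x. g (\<lambda>i. hs i x)). x i = y i"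
    then have xy: "\<forall>i<m. x i = y i" by simp
    have "hs i x = hs i y" if "i < n" for i by (rule wf_eq[OF wfh[OF that]]) (use xy in blast)
    then have "g (\<lambda>i. hs i x) = g (\<lambda>i. hs i y)" by (intro wf_eq[OF wfg]) 
    then show "snd (m, \<lambda>x. g (\<lambda>i. hs i x)) x = snd (m, \<lambda>x. g (\<lambda>i. hs i x)) y"
      by simp
  qed
  moreover have "trl (m, \<lambda>x. g (\<lambda>i. hs i x)) \<subseteq> M"
  proof
    fix t assume "t \<in> trl (m, \<lambda>x. g (\<lambda>i. hs i x))"
    then obtain j a where j: "j < m" and t: "t = (\<lambda>z. g (\<lambda>i. hs i (a(j := z))))"
      unfolding trl_def by auto
    have "\<forall>\<rho>\<in>Q. preserves_rel t \<rho>"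
    proof
      fix \<rho> assume "\<rho> \<in> Q"
      then have q: "quasiorder \<rho>" using qo by blast
      have pM: "\<And>s. s \<in> M \<Longrightarrow> preserves_rel s \<rho>" using char \<open>\<rho> \<in> Q\<close> by blast
      show "preserves_rel t \<rho>"
      proof (rule pres_by_pairs[OF q])
        fix x y assume xy: "[x,y] \<in> snd \<rho>"
        have "[hs i (a(j := x)), hs i (a(j := y))] \<in> snd \<rho>" if "i < n" for i
        proof -
          have "(\<lambda>z. hs i (a(j := z))) \<in> trl (m, hs i)" unfolding trl_def mem_Collect_eq fst_conv snd_conv
            by (rule exI[of _ j], rule conjI[OF j], rule exI[of _ a], rule refl)
          then have "preserves_rel (\<lambda>z. hs i (a(j := z))) \<rho>" using trh[OF that] pM by blast
          from pres_pair[OF this xy] show ?thesis .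
        qed
        then have "\<forall>i<n. [hs i (a(j := x)), hs i (a(j := y))] \<in> snd \<rho>" by blast
        from op_pres[OF wfg trg pM q this] show "[t x, t y] \<in> snd \<rho>" unfolding t by simp
      qed
    qed
    then show "t \<in> M" using char by blast
  qed
  ultimately show "(m, \<lambda>x. g (\<lambda>i. hs i x)) \<in> Nstar M" unfolding Nstar_def by blast
qed

lemma const_in_N:
  assumes "is_clone (Nstar N)" shows "constmaps \<subseteq> N"
proof
  fix c :: "'a \<Rightarrow> 'a" assume "c \<in> constmaps"
  then obtain v where c: "c = (\<lambda>_. v)" unfolding constmaps_def by blast
  have "(2, \<lambda>x. x (0::nat)) \<in> Nstar N" using assms unfolding is_clone_def by auto
  then have "trl (2, \<lambda>x::nat \<Rightarrow> 'a. x 0) \<subseteq> N" unfolding Nstar_def by blast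
  moreover have "(\<lambda>z. ((\<lambda>_. v)(1 := z)) (0::nat)) \<in> trl (2, \<lambda>x::nat \<Rightarrow> 'a. x 0)"
    unfolding trl_def mem_Collect_eq fst_conv snd_conv
    by (rule exI[of _ 1], rule conjI, simp, rule exI[of _ "\<lambda>_. v"], rule refl)
  ultimately show "c \<in> N" using c by auto
qed

lemma quasi_gen: "quasiorder \<rho> \<Longrightarrow> gen_quasiorder \<rho>"
proof -
  assume q: "quasiorder \<rho>"
  have u: "[0..<2] = [0::nat, 1]" by (simp add: upt_rec)
  have r2: "replicate 2 a = [a,a]" for a :: 'a by (simp add: numeral_2_eq_2)
  have f2: "fst \<rho> = 2" using q unfolding quasiorder_def by blast
  show ?thesis unfolding gen_quasiorder_def Let_def f2 u r2
  proof (intro conjI allI impI)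
    show "\<forall>r\<in>snd \<rho>. length r = 2" using q unfolding quasiorder_def by blast
  next
    fix a show "[a,a] \<in> snd \<rho>" by (rule qo_refl[OF q])
  next
    fix X :: "nat \<Rightarrow> nat \<Rightarrow> 'a"
    assume h: "(\<forall>i<2. map (X i) [0, 1] \<in> snd \<rho>) \<and> (\<forall>j<2. map (\<lambda>i. X i j) [0, 1] \<in> snd \<rho>)"
    have "[X 0 0, X 0 1] \<in> snd \<rho>" using h by simp
    moreover have "[X 0 1, X 1 1] \<in> snd \<rho>" using h by simp
    ultimately show "map (\<lambda>i. X i i) [0, 1] \<in> snd \<rho>" using qo_trans[OF q] by simp
  qed simp
qed



lemma pow_in: "is_monoid N \<Longrightarrow> g \<in> N \<Longrightarrow> g^^j \<in> N"
proof (induction j)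
  case 0 then show ?case unfolding is_monoid_def by (simp add: id_def)
next
  case (Suc j)
  then have "g \<circ> g^^j \<in> N" unfolding is_monoid_def by blast
  then show ?case by (simp add: comp_def)
qed

lemma Mf_monoid: "is_monoid (Mf f)"
  unfolding is_monoid_def
proof (intro conjI ballI)
  show "id \<in> Mf f" unfolding Mf_def gen_monoid_def by (auto intro: range_eqI[of _ _ 0])
next
  fix g h assume g: "g \<in> Mf f" and h: "h \<in> Mf f"
  show "g \<circ> h \<in> Mf f"
  proof (cases "h \<in> constmaps")
    case True
    then obtain c where "h = (\<lambda>_. c)" unfolding constmaps_def by blast
    then have "g \<circ> h = (\<lambda>_. g c)" by auto
    then show ?thesis unfolding Mf_def constmaps_def by blast
  next
    case hF: False
    then obtain j where hj: "h = f^^j" using h unfolding Mf_def gen_monoid_def by blast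
    show ?thesis
    proof (cases "g \<in> constmaps")
      case True
      then obtain c where "g = (\<lambda>_. c)" unfolding constmaps_def by blast
      then have "g \<circ> h = (\<lambda>_. c)" by auto
      then show ?thesis unfolding Mf_def constmaps_def by blast
    next
      case False
      then obtain i where gi: "g = f^^i" using g unfolding Mf_def gen_monoid_def by blast
      have "g \<circ> h = f^^(i+j)" using gi hj by (simp add: funpow_add)
      then show ?thesis unfolding Mf_def gen_monoid_def by blast
    qed
  qed
qed

lemma End_Mf:
  fixes f :: "'a::finite \<Rightarrow> 'a"
  assumes "type_I f \<or> type_II f \<or> type_III f"
  shows "End (Quord (Mf f)) \<subseteq> Mf f"
  using assms typeI_End typeII_End typeIII_End by blast

theorem proposition5p2:
  fixes f :: "'a::finite \<Rightarrow> 'a"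
  assumes "f \<notin> Tset"
    and "type_I f \<or> type_II f \<or> type_III f"
  shows "minimal_u_closed (gen_monoid f \<union> constmaps)
    \<and> uclosure (gen_monoid f \<union> constmaps) = gen_monoid f \<union> constmaps
    \<and> End (gQuord (gen_monoid f \<union> constmaps)) = End (Quord (gen_monoid f \<union> constmaps))"
proof -
  have Mdef: "gen_monoid f \<union> constmaps = Mf f" by (simp add: Mf_def)
  have EM: "End (Quord (Mf f)) \<subseteq> Mf f" using End_Mf[OF assms(2)] .
  have char: "t \<in> Mf f \<longleftrightarrow> (\<forall>\<rho>\<in>Quord (Mf f). preserves_rel t \<rho>)" for t
  proof
    assume "t \<in> Mf f" then show "\<forall>\<rho>\<in>Quord (Mf f). preserves_rel t \<rho>" unfolding Quord_def by blast
  next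
    assume "\<forall>\<rho>\<in>Quord (Mf f). preserves_rel t \<rho>"
    then have "t \<in> End (Quord (Mf f))" unfolding End_def by blast
    then show "t \<in> Mf f" using EM by blast
  qed
  have clone: "is_clone (Nstar (Mf f))"
    by (rule clone_lemma[OF char]) (simp add: Quord_def)
  have mon: "is_monoid (Mf f)" by (rule Mf_monoid)
  have ucl: "uclosure (Mf f) = Mf f"
  proof
    show "uclosure (Mf f) \<subseteq> Mf f" unfolding uclosure_def using clone mon by (intro Inter_lower) blast
    show "Mf f \<subseteq> uclosure (Mf f)" unfolding uclosure_def by (intro Inter_greatest) blast
  qed
  have uc: "u_closed (Mf f)" unfolding u_closed_def using mon ucl by blast
  have f0: "f^^0 \<in> Mf f" and f1: "f^^1 \<in> Mf f" unfolding Mf_def gen_monoid_def by blast+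
  have TM: "Tset \<subseteq> Mf f" unfolding Tset_def using f0 by (auto simp: Mf_def)
  have fM: "f \<in> Mf f" using f1 by simp
  have Tsub: "Tset \<subset> Mf f" using TM fM assms(1) by blast
  have minimal: "M' = Tset" if uM: "u_closed M'" and sM: "M' \<subset> Mf f" for M'
  proof -
    have monM: "is_monoid M'" and uclM: "uclosure M' = M'" using uM unfolding u_closed_def by auto
    have "constmaps \<subseteq> uclosure M'" unfolding uclosure_def
      by (intro Inter_greatest) (use const_in_N in blast)
    then have cM: "constmaps \<subseteq> M'" using uclM by simp
    have idM: "id \<in> M'" using monM unfolding is_monoid_def by blast
    show "M' = Tset"
    proof
      show "Tset \<subseteq> M'" unfolding Tset_def using cM idM by blast
    next
      show "M' \<subseteq> Tset"
      proof (rule ccontr)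
        assume "\<not> M' \<subseteq> Tset"
        then obtain g where gM: "g \<in> M'" and gT: "g \<notin> Tset" by blast
        have "g \<in> Mf f" using gM sM by blast
        moreover have "g \<notin> constmaps" using gT unfolding Tset_def by blast
        ultimately obtain k where gk: "g = f^^k" unfolding Mf_def gen_monoid_def by blast
        have kid: "f^^k \<noteq> id" using gT gk unfolding Tset_def by blast
        have "f \<in> M'"
        proof -
          { assume "type_I f"
            then have ff: "f \<circ> f = f" unfolding type_I_def .
            obtain j where "k = Suc j" using kid by (cases k) auto
            then have "g = f" using gk typeI_pow[OF ff] by simp
            then have ?thesis using gM by simp }
          moreover
          { assume "type_II f"
            then obtain v where ff: "f \<circ> f = (\<lambda>_. v)" unfolding type_II_def by blast
            have ?thesis
            proof (cases k)
              case 0 then show ?thesis using kid by simp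
            next
              case (Suc j)
              show ?thesis
              proof (cases j)
                case 0 then show ?thesis using gM gk \<open>k = Suc j\<close> by simp
              next
                case (Suc i)
                then have "g = (\<lambda>_. v)" using gk \<open>k = Suc j\<close> typeII_pow[OF ff, of i] by auto
                then have "g \<in> constmaps" unfolding constmaps_def by blast
                then show ?thesis using gT unfolding Tset_def by blast
              qed
            qed }
          moreover
          { assume "type_III f"
            then obtain p where p: "prime p" "f^^p = id" unfolding type_III_def by blast
            have "\<not> p dvd k"
            proof
              assume "p dvd k"
              then obtain m where "k = p*m" by blast
              then show False using kid fp_mult_id[OF p(2)] by simp
            qed
            then obtain j where "(f^^k)^^j = f" using pow_inv[OF p] by blast
            then have ?thesis using pow_in[OF monM gM, of j] gk by simp }
          ultimately show ?thesis using assms(2) by blast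
        qed
        then have "gen_monoid f \<subseteq> M'" unfolding gen_monoid_def using pow_in[OF monM] by blast
        then have "Mf f \<subseteq> M'" using cM unfolding Mf_def by blast
        then show False using sM by blast
      qed
    qed
  qed
  have mu: "minimal_u_closed (Mf f)" unfolding minimal_u_closed_def using uc Tsub minimal by blast
  have QG: "Quord (Mf f) \<subseteq> gQuord (Mf f)" unfolding Quord_def gQuord_def using quasi_gen by blast
  have e1: "End (gQuord (Mf f)) \<subseteq> End (Quord (Mf f))" using QG unfolding End_def by blast
  have e2: "Mf f \<subseteq> End (gQuord (Mf f))" unfolding End_def gQuord_def by blast
  have endeq: "End (gQuord (Mf f)) = End (Quord (Mf f))" using e1 e2 EM by blast
  show ?thesis unfolding Mdef using mu ucl endeq by blast
qed

end
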